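(* Let $\mathbb{E}(3,3)$ be the set of partitions in $\mathbb{C}(3,3)$ having no odd parts, and let $\mathbb{F}(3,3)$ be the set of pairs $(\pi,\zeta)$ of partitions such that $\pi\in\mathbb{E}(3,3)$ and $\zeta$ is a partition into distinct odd parts, each at least $2N_2(\pi)+1$ (the empty partition allowed). There is a bijection $\Phi\colon\mathbb{F}(3,3)\to\mathbb{C}(3,3)$ such that for every $(\pi,\zeta)\in\mathbb{F}(3,3)$, the partition $\omega=\Phi(\pi,\zeta)$ satisfies $|\omega|=|\pi|+|\zeta|$ and $\ell(\omega)=\ell(\pi)+\ell(\zeta)$.
   Context: A partition $\pi=(\pi_1,\dots,\pi_\ell)$ is a finite non-increasing sequence of positive integers; $\ell(\pi)$ is its number of parts and $|\pi|$ its sum. Göllnitz–Gordon marking: $GG(\pi)$ assigns a positive integer (mark) to each part, processing the parts from smallest to largest ($\pi_\ell,\dots,\pi_1$); $\pi_i$ receives the smallest positive integer different from the marks of all parts $\pi_g$ with $g>i$ and $\pi_i-\pi_g\le 2$, where $\pi_i-\pi_g<2$ is required when $\pi_i$ is odd. $N_2(\pi)$ is the number of parts of $\pi$ receiving mark $2$. $\mathbb{C}(3,3)$: the set of partitions $\pi=(\pi_1,\dots,\pi_\ell)$ such that (i) no odd part is repeated; (ii) $\pi_i\ge\pi_{i+2}+2$ for $1\le i\le\ell-2$, with strict inequality if $\pi_i$ is even; (iii) at most $2$ parts are $\le 2$. *)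

theory Defs
  imports Main
begin

text \<open>A partition is a list of positive naturals in non-increasing order
  (pi_1 >= pi_2 >= ... >= pi_l); index i of the paper is list index i-1.\<close>
definition is_partition :: "nat list \<Rightarrow> bool" where
  "is_partition p \<longleftrightarrow> sorted_wrt (\<ge>) p \<and> (\<forall>x\<in>set p. 0 < x)"

fun gg_marks :: "nat list \<Rightarrow> nat list" where
  "gg_marks [] = []"
| "gg_marks (x # xs) =
     (let ms = gg_marks xs;
          forb = {ms ! j | j. j < length xs \<and> x \<le> xs ! j + 2 \<and>
                               (odd x \<longrightarrow> x < xs ! j + 2)}
      in (LEAST m. 0 < m \<and> m \<notin> forb) # ms)"

definition N2 :: "nat list \<Rightarrow> nat" where
  "N2 p = length (filter (\<lambda>m. m = 2) (gg_marks p))"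

definition C33 :: "nat list set" where
  "C33 = {p. is_partition p
     \<and> (\<forall>i j. i < j \<and> j < length p \<and> p ! i = p ! j \<longrightarrow> even (p ! i))
     \<and> (\<forall>i. i + 2 < length p \<longrightarrow>
          p ! (i + 2) + 2 \<le> p ! i \<and> (even (p ! i) \<longrightarrow> p ! (i + 2) + 2 < p ! i))
     \<and> length (filter (\<lambda>x. x \<le> 2) p) \<le> 2}"

definition E33 :: "nat list set" where
  "E33 = {p \<in> C33. \<forall>x\<in>set p. even x}"

definition F33 :: "(nat list \<times> nat list) set" where
  "F33 = {(p, z). p \<in> E33 \<and> is_partition z \<and> distinct z \<and>
                  (\<forall>x\<in>set z. odd x \<and> 2 * N2 p + 1 \<le> x)}"

end

theory Submission
  imports Defs
begin


fun goodl :: "nat list \<Rightarrow> bool" where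
  "goodl [] = True"
| "goodl [a] = (0 < a)"
| "goodl [a, b] = (b \<le> a \<and> 0 < b \<and> (a = b \<longrightarrow> even a))"
| "goodl (a # b # c # r) = (b \<le> a \<and> (a = b \<longrightarrow> even a) \<and> c + 2 \<le> a \<and> (even a \<longrightarrow> c + 3 \<le> a) \<and> goodl (b # c # r))"

fun V :: "nat list \<Rightarrow> int" where
  "V [] = -1"
| "V [x] = (if odd x then int x else -1)"
| "V (x # y # r) = (if odd x then int x else if even y \<and> x \<le> y + 2 then V r + 2 else V (y # r))"

fun ins :: "nat \<Rightarrow> nat list \<Rightarrow> nat list" where
  "ins t [] = [t]"
| "ins t [y] = (if y < t then [t, y] else [y, t])"
| "ins t (y # y2 # r) = (if y < t \<and> \<not> (y2 = y \<and> y + 1 = t) then t # y # y2 # r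
       else if y = y2 then (y+2) # y # ins (t-2) r
       else if y = y2 + 2 then y # y # ins (t-2) r
       else y # ins t (y2 # r))"

definition comb :: "nat \<Rightarrow> nat \<times> nat list \<Rightarrow> nat \<times> nat list" where
  "comb x tr = (let t = fst tr; r = snd tr in
     if r \<noteq> [] \<and> hd r = x then (t+2, x # (x-2) # tl r)
     else if r \<noteq> [] \<and> hd r + 2 = x then (t+2, (x-2) # r) else (t, x # r))"

fun del :: "nat list \<Rightarrow> nat \<times> nat list" where
  "del [] = (0, [])"
| "del (x # r) = (if odd x then (x, r) else comb x (del r))"

definition okins :: "nat \<Rightarrow> nat list \<Rightarrow> bool" where
  "okins t r \<longleftrightarrow> odd t \<and> V r < int t"


lemma goodl_tl: "goodl (a # r) \<Longrightarrow> goodl r"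
  by (induction r rule: goodl.induct) (auto split: if_splits)

lemma goodl_Cons_Cons_Cons: "goodl (a # b # c # r) \<longleftrightarrow> (b \<le> a \<and> (a = b \<longrightarrow> even a) \<and> c + 2 \<le> a \<and> (even a \<longrightarrow> c + 3 \<le> a) \<and> goodl (b # c # r))"
  by simp

lemma goodl_le: "goodl (a # b # r) \<Longrightarrow> b \<le> a \<and> (a = b \<longrightarrow> even a) \<and> 0 < b"
  by (cases r rule: goodl.cases) (auto dest: goodl_tl)

lemma goodl_pos: "goodl (a # r) \<Longrightarrow> 0 < a"
  by (cases r rule: goodl.cases) (auto dest: goodl_tl)

lemma fresh_of_good: "goodl (y # z # r) \<Longrightarrow> even y \<Longrightarrow> r = [] \<or> odd (hd r) \<or> hd r + 4 \<le> y"
proof (cases r)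
  case (Cons h r')
  assume g: "goodl (y # z # r)" and e: "even y"
  then have "h + 3 \<le> y" using Cons by simp
  then show ?thesis using Cons e by simp presburger
qed simp

definition Inv :: "nat \<Rightarrow> nat \<Rightarrow> nat \<Rightarrow> nat list \<Rightarrow> bool" where
  "Inv q p t r \<longleftrightarrow> even q \<and> even p \<and> p \<le> q \<and>
     (if q = p then goodl (p # (p-2) # r) else goodl (q # p # r)) \<and> okins t r \<and> t < p \<and> t + 3 \<le> q \<and>
     (r = [] \<or> odd (hd r) \<or> hd r + 4 \<le> p)"

lemma V_ge: "V r \<ge> -1"
  by (induction r rule: V.induct) auto

lemma Inv_facts:
  assumes "Inv q p t (y # r)"
  shows "y \<le> p \<and> (q = p \<longrightarrow> y + 3 \<le> p) \<and> (odd y \<or> y + 4 \<le> p) \<and> t < p \<and> t + 3 \<le> q \<and> even p \<and> even q \<and> p \<le> q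
    \<and> odd t \<and> V (y # r) < int t \<and> goodl (y # r) \<and> (r \<noteq> [] \<longrightarrow> (q = p \<longrightarrow> hd r + 5 \<le> p) \<and> hd r + 3 \<le> p)"
proof -
  have A: "even q" "even p" "p \<le> q" "okins t (y # r)" "t < p" "t + 3 \<le> q" "odd y \<or> y + 4 \<le> p"
    using assms by (auto simp: Inv_def)
  have B: "if q = p then goodl (p # (p-2) # y # r) else goodl (q # p # y # r)"
    using assms unfolding Inv_def by blast
  show ?thesis
  proof (cases "q = p")
    case True
    with B have g: "goodl (p # (p-2) # y # r)" by simp
    then have g2: "goodl (y # r)" by (auto dest: goodl_tl)
    have "y + 3 \<le> p" "y \<le> p - 2" using g A by auto
    moreover have "r \<noteq> [] \<longrightarrow> hd r + 5 \<le> p" using g A by (cases r) auto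
    ultimately show ?thesis using A g2 True by (auto simp: okins_def)
  next
    case False
    with B have g: "goodl (q # p # y # r)" by simp
    then have g2: "goodl (y # r)" by (auto dest: goodl_tl)
    have "y \<le> p" using goodl_le[OF goodl_tl[OF g]] by auto
    moreover have "r \<noteq> [] \<longrightarrow> hd r + 3 \<le> p" using g A by (cases r) auto
    ultimately show ?thesis using A g2 False by (auto simp: okins_def)
  qed
qed

lemma A1: "Inv q p t r \<Longrightarrow> goodl (q # p # ins t r)"
proof (induction t r arbitrary: q p rule: ins.induct)
  case (1 t)
  then show ?case by (auto simp: Inv_def okins_def odd_pos)
next
  case (2 t y)
  then show ?case by (auto simp: Inv_def okins_def odd_pos split: if_splits; presburger)
next
  case (3 t y y2 r)
  from Inv_facts[OF "3.prems"] have F: "y \<le> p" "q = p \<longrightarrow> y + 3 \<le> p" "odd y \<or> y + 4 \<le> p" "t < p" "t + 3 \<le> q"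
    "even p" "even q" "p \<le> q" "odd t" "V (y # y2 # r) < int t" "goodl (y # y2 # r)" "q = p \<longrightarrow> y2 + 5 \<le> p" "y2 + 3 \<le> p"
    by auto
  have y2y: "y2 \<le> y" "y = y2 \<longrightarrow> even y" using F(11) by (cases r; auto)+
  show ?case
  proof (cases "y < t \<and> \<not> (y2 = y \<and> y + 1 = t)")
    case True
    have "y + 3 \<le> p" using F True by presburger
    moreover have "y2 + 2 \<le> t" using F True y2y by presburger
    ultimately show ?thesis using F True y2y by (simp add: odd_pos)
  next
    case stop: False
    have tle: "t \<le> y + 1" using stop by auto
    have yev: "even y"
    proof (rule ccontr)
      assume "odd y"
      then have "y \<noteq> y2" using y2y by auto
      then have "t \<le> y" using stop by auto
      moreover have "V (y # y2 # r) = int y" using \<open>odd y\<close> by simp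
      ultimately show False using F(10) by simp
    qed
    have ty0: "y2 = y \<or> t \<le> y" using stop by auto
    have "t \<noteq> y" using yev F(9) by auto
    then have ty: "y2 = y \<or> t < y" using ty0 by auto
    show ?thesis
    proof (cases "y = y2")
      case True
      have Vr: "V (y # y2 # r) = V r + 2" using True yev by simp
      have t3: "3 \<le> t" using Vr F(9) F(10) V_ge[of r] by presburger
      have gr: "goodl ((y+2) # y # r)" using F(11) True by (cases r) auto
      have fr: "r = [] \<or> odd (hd r) \<or> hd r + 4 \<le> y" using fresh_of_good[OF F(11) yev] .
      have "Inv (y+2) y (t-2) r" unfolding Inv_def okins_def
        using yev gr fr Vr F(9) F(10) t3 tle by (auto; presburger)
      then have "goodl ((y+2) # y # ins (t-2) r)" using "3.IH"(1) stop True by blast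
      moreover have "y + 4 \<le> p" using F(3) yev by auto
      moreover have "y + 5 \<le> q" using F(12) True F(6) F(7) F(8) \<open>y + 4 \<le> p\<close> by presburger
      ultimately show ?thesis using stop True F(6) F(8) by auto
    next
      case ne: False
      show ?thesis
      proof (cases "y = y2 + 2")
        case True
        have Vr: "V (y # y2 # r) = V r + 2" using True yev by simp
        have t3: "3 \<le> t" using Vr F(9) F(10) V_ge[of r] by presburger
        have ty': "t + 1 \<le> y" using ty ne yev F(9) by presburger
        have fr: "r = [] \<or> odd (hd r) \<or> hd r + 4 \<le> y" using fresh_of_good[OF F(11) yev] .
        have "Inv y y (t-2) r" unfolding Inv_def okins_def
          using yev F(11) True fr Vr F(9) F(10) t3 ty' by (auto; presburger)
        then have "goodl (y # y # ins (t-2) r)" using "3.IH"(2) stop ne True by blast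
        moreover have "y + 4 \<le> p" using F(3) yev by auto
        ultimately show ?thesis using stop ne True F(6) F(8) by auto
      next
        case False
        have ty': "t + 1 \<le> y" using ty ne yev F(9) by presburger
        have ncl: "\<not> (even y2 \<and> y \<le> y2 + 2)" using ne False y2y yev by presburger
        have Vr: "V (y # y2 # r) = V (y2 # r)" using ncl yev by auto
        have "y + 4 \<le> p" using F(3) yev by auto
        have fr: "odd y2 \<or> y2 + 4 \<le> y" using ne False y2y yev by presburger
        have "Inv p y t (y2 # r)" unfolding Inv_def okins_def
          using yev F(6) F(9) F(10) F(11) F(13) \<open>y + 4 \<le> p\<close> Vr ty' fr by auto
        then have "goodl (p # y # ins t (y2 # r))" using "3.IH"(3) stop ne False by blast
        then show ?thesis using stop ne False F(6) F(8) \<open>y + 4 \<le> p\<close> by auto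
      qed
    qed
  qed
qed


lemma ins_good:
  assumes "goodl r" "okins t r"
  shows "goodl (ins t r)"
proof -
  define K where "K = 2 * (t + hd (r @ [0])) + 10"
  have "Inv K K t r"
  proof (cases r)
    case Nil
    then show ?thesis using assms by (auto simp: Inv_def K_def okins_def)
  next
    case (Cons h r')
    have "goodl (K # (K-2) # h # r')"
    proof (cases r')
      case Nil
      then show ?thesis using assms Cons by (auto simp: K_def goodl_pos)
    next
      case (Cons h2 r'')
      have "h2 \<le> h" using assms(1) \<open>r = h # r'\<close> Cons goodl_le by blast
      then show ?thesis using assms \<open>r = h # r'\<close> Cons by (auto simp: K_def)
    qed
    then show ?thesis using assms Cons by (auto simp: Inv_def K_def okins_def)
  qed
  from A1[OF this] show ?thesis by (auto dest: goodl_tl)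
qed

lemma par4: "h + 3 \<le> y \<Longrightarrow> even y \<Longrightarrow> odd h \<or> h + 4 \<le> (y::nat)" by presburger

lemma pass_facts:
  assumes g: "goodl (y # y2 # r)" and ok: "okins t (y # y2 # r)" and stop: "\<not> (y < t \<and> \<not> (y2 = y \<and> y + 1 = t))"
  shows "even y \<and> odd t \<and> (y = y2 \<or> t < y) \<and> t \<le> y + 1 \<and> y2 \<le> y
    \<and> (y = y2 \<longrightarrow> V (y#y2#r) = V r + 2 \<and> 3 \<le> t \<and> (r \<noteq> [] \<longrightarrow> odd (hd r) \<or> hd r + 4 \<le> y))
    \<and> (y = y2 + 2 \<longrightarrow> V (y#y2#r) = V r + 2 \<and> 3 \<le> t \<and> t + 1 \<le> y \<and> (r \<noteq> [] \<longrightarrow> odd (hd r) \<or> hd r + 4 \<le> y))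
    \<and> (y \<noteq> y2 \<and> y \<noteq> y2 + 2 \<longrightarrow> V (y # y2 # r) = V (y2 # r) \<and> (odd y2 \<or> y2 + 4 \<le> y) \<and> t + 1 \<le> y)"
proof -
  have y2y: "y2 \<le> y" "y = y2 \<longrightarrow> even y" using goodl_le[OF g] by auto
  have ot: "odd t" and Vt: "V (y # y2 # r) < int t" using ok by (auto simp: okins_def)
  have yev: "even y"
  proof (rule ccontr)
    assume "odd y"
    then have "y \<noteq> y2" using y2y by auto
    then have "t \<le> y" using stop by auto
    moreover have "V (y # y2 # r) = int y" using \<open>odd y\<close> by simp
    ultimately show False using Vt by simp
  qed
  have ty0: "y2 = y \<or> t \<le> y" using stop by auto
  have "t \<noteq> y" using yev ot by auto
  then have ty: "y2 = y \<or> t < y" using ty0 by auto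
  have hr: "r \<noteq> [] \<longrightarrow> hd r + 3 \<le> y" using g yev by (cases r) auto
  have c1: "y = y2 \<longrightarrow> V (y#y2#r) = V r + 2 \<and> 3 \<le> t \<and> (r \<noteq> [] \<longrightarrow> odd (hd r) \<or> hd r + 4 \<le> y)"
  proof
    assume e: "y = y2"
    then have v: "V (y#y2#r) = V r + 2" using yev by simp
    moreover have "3 \<le> t" using v Vt V_ge[of r] ot by presburger
    moreover have "r \<noteq> [] \<longrightarrow> odd (hd r) \<or> hd r + 4 \<le> y" using hr yev par4 by blast
    ultimately show "V (y#y2#r) = V r + 2 \<and> 3 \<le> t \<and> (r \<noteq> [] \<longrightarrow> odd (hd r) \<or> hd r + 4 \<le> y)" by blast
  qed
  have c2: "y = y2 + 2 \<longrightarrow> V (y#y2#r) = V r + 2 \<and> 3 \<le> t \<and> t + 1 \<le> y \<and> (r \<noteq> [] \<longrightarrow> odd (hd r) \<or> hd r + 4 \<le> y)"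
  proof
    assume e: "y = y2 + 2"
    then have v: "V (y#y2#r) = V r + 2" using yev by simp
    moreover have "3 \<le> t" using v Vt V_ge[of r] ot by presburger
    moreover have "t + 1 \<le> y" using ty e ot yev by presburger
    moreover have "r \<noteq> [] \<longrightarrow> odd (hd r) \<or> hd r + 4 \<le> y" using hr yev par4 by blast
    ultimately show "V (y#y2#r) = V r + 2 \<and> 3 \<le> t \<and> t + 1 \<le> y \<and> (r \<noteq> [] \<longrightarrow> odd (hd r) \<or> hd r + 4 \<le> y)" by blast
  qed
  have c3: "y \<noteq> y2 \<and> y \<noteq> y2 + 2 \<longrightarrow> V (y # y2 # r) = V (y2 # r) \<and> (odd y2 \<or> y2 + 4 \<le> y) \<and> t + 1 \<le> y"
  proof
    assume e: "y \<noteq> y2 \<and> y \<noteq> y2 + 2"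
    have ncl: "\<not> (even y2 \<and> y \<le> y2 + 2)" using e y2y yev by presburger
    have "V (y # y2 # r) = V (y2 # r)" using ncl yev by auto
    moreover have "odd y2 \<or> y2 + 4 \<le> y" using e y2y yev by presburger
    moreover have "t + 1 \<le> y" using ty e ot yev by presburger
    ultimately show "V (y # y2 # r) = V (y2 # r) \<and> (odd y2 \<or> y2 + 4 \<le> y) \<and> t + 1 \<le> y" by blast
  qed
  have tle: "t \<le> y + 1" using stop by auto
  show ?thesis using yev ot ty tle y2y(1) c1 c2 c3 by blast
qed


lemma okins_m2: "V r + 2 < int t \<Longrightarrow> odd t \<Longrightarrow> okins (t-2) r"
  using V_ge[of r] unfolding okins_def by presburger

lemma goodl_tl2: "goodl (a # b # r) \<Longrightarrow> goodl r"
  by (auto dest: goodl_tl)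

lemma ins_ne: "ins t r \<noteq> []"
  by (induction t r rule: ins.induct) auto

lemma V_ins:
  assumes "goodl r" "okins t r"
  shows "V (ins t r) = int t \<and> (\<forall>a. even a \<and> (r = [] \<or> odd (hd r) \<or> hd r + 4 \<le> a) \<longrightarrow> V (a # ins t r) = int t)"
  using assms
proof (induction t r rule: ins.induct)
  case (1 t)
  then show ?case by (auto simp: okins_def)
next
  case (2 t y)
  then show ?case by (auto simp: okins_def split: if_splits)
next
  case (3 t y y2 r)
  show ?case
  proof (cases "y < t \<and> \<not> (y2 = y \<and> y + 1 = t)")
    case True
    then show ?thesis using "3.prems" by (auto simp: okins_def)
  next
    case stop: False
    note P = pass_facts[OF "3.prems" stop]
    have Vt: "V (y # y2 # r) < int t" using "3.prems"(2) by (simp add: okins_def)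
    have yev: "even y" and ot: "odd t" using P by blast+
    show ?thesis
    proof (cases "y = y2")
      case True
      have Q: "V (y#y2#r) = V r + 2" "3 \<le> t" "r \<noteq> [] \<longrightarrow> odd (hd r) \<or> hd r + 4 \<le> y"
        using P True by blast+
      have ok: "okins (t-2) r" using Q(1) Vt ot okins_m2 by auto
      have gr: "goodl r" using "3.prems"(1) goodl_tl2 by blast
      have IH: "V (ins (t-2) r) = int (t-2) \<and> (\<forall>a. even a \<and> (r = [] \<or> odd (hd r) \<or> hd r + 4 \<le> a) \<longrightarrow> V (a # ins (t-2) r) = int (t-2))"
        using "3.IH"(1)[OF stop True gr ok] .
      have IH2: "V (y # ins (t-2) r) = int (t-2)" using IH Q(3) yev by blast
      have e: "ins t (y # y2 # r) = (y+2) # y # ins (t-2) r" using stop True by simp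
      have v1: "V (ins t (y # y2 # r)) = int t" unfolding e using IH yev Q(2) by simp
      have v2: "V (a # ins t (y # y2 # r)) = int t" if "even a" "y + 4 \<le> a" for a
      proof (cases "a \<le> y + 4")
        case True
        then have "a = y + 4" using that by auto
        then have "V (a # ins t (y # y2 # r)) = V (y # ins (t-2) r) + 2" unfolding e using yev by simp
        also have "\<dots> = int t" using IH2 Q(2) by simp
        finally show ?thesis .
      next
        case False
        then show ?thesis using v1 that yev unfolding e by simp
      qed
      show ?thesis
      proof (intro conjI allI impI)
        show "V (ins t (y # y2 # r)) = int t" by (rule v1)
        fix a assume "even a \<and> (y # y2 # r = [] \<or> odd (hd (y # y2 # r)) \<or> hd (y # y2 # r) + 4 \<le> a)"
        then have "even a" "y + 4 \<le> a" using yev by auto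
        then show "V (a # ins t (y # y2 # r)) = int t" by (rule v2)
      qed
    next
      case ne: False
      show ?thesis
      proof (cases "y = y2 + 2")
        case True
        have Q: "V (y#y2#r) = V r + 2" "3 \<le> t" using P True by blast+
        have ok: "okins (t-2) r" using Q(1) Vt ot okins_m2 by auto
        have gr: "goodl r" using "3.prems"(1) goodl_tl2 by blast
        have IH: "V (ins (t-2) r) = int (t-2)"
          using "3.IH"(2)[OF stop ne True gr ok] by blast
        have e: "ins t (y # y2 # r) = y # y # ins (t-2) r" using stop ne True by simp
        have v1: "V (ins t (y # y2 # r)) = int t" unfolding e using IH yev Q(2) by simp
        have v2: "V (a # ins t (y # y2 # r)) = int t" if "even a" "y + 4 \<le> a" for a
          using v1 that yev unfolding e by simp
        show ?thesis
        proof (intro conjI allI impI)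
          show "V (ins t (y # y2 # r)) = int t" by (rule v1)
          fix a assume "even a \<and> (y # y2 # r = [] \<or> odd (hd (y # y2 # r)) \<or> hd (y # y2 # r) + 4 \<le> a)"
          then have "even a" "y + 4 \<le> a" using yev by auto
          then show "V (a # ins t (y # y2 # r)) = int t" by (rule v2)
        qed
      next
        case False
        have Q: "V (y # y2 # r) = V (y2 # r)" "odd y2 \<or> y2 + 4 \<le> y" using P ne False by blast+
        have ok: "okins t (y2 # r)" using Q(1) Vt ot by (simp add: okins_def)
        have gr: "goodl (y2 # r)" using "3.prems"(1) goodl_tl by blast
        have IH: "\<forall>a. even a \<and> (y2 # r = [] \<or> odd (hd (y2 # r)) \<or> hd (y2 # r) + 4 \<le> a) \<longrightarrow> V (a # ins t (y2 # r)) = int t"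
          using "3.IH"(3)[OF stop ne False gr ok] by blast
        have IH2: "V (y # ins t (y2 # r)) = int t" using IH Q(2) yev by auto
        have e: "ins t (y # y2 # r) = y # ins t (y2 # r)" using stop ne False by simp
        have v1: "V (ins t (y # y2 # r)) = int t" unfolding e using IH2 .
        have v2: "V (a # ins t (y # y2 # r)) = int t" if "even a" "y + 4 \<le> a" for a
        proof -
          obtain b X where bX: "ins t (y2 # r) = b # X" using ins_ne by (cases "ins t (y2 # r)") auto
          have "V (a # y # b # X) = V (y # b # X)" using that yev by simp
          then show ?thesis using IH2 unfolding e bX by simp
        qed
        show ?thesis
        proof (intro conjI allI impI)
          show "V (ins t (y # y2 # r)) = int t" by (rule v1)
          fix a assume "even a \<and> (y # y2 # r = [] \<or> odd (hd (y # y2 # r)) \<or> hd (y # y2 # r) + 4 \<le> a)"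
          then have "even a" "y + 4 \<le> a" using yev by auto
          then show "V (a # ins t (y # y2 # r)) = int t" by (rule v2)
        qed
      qed
    qed
  qed
qed




lemma ins_pass:
  assumes g: "goodl (y # y2 # r)" and ok: "okins t (y # y2 # r)" and stop: "\<not> (y < t \<and> \<not> (y2 = y \<and> y + 1 = t))"
  shows "(y = y2 \<longrightarrow> ins t (y # y2 # r) = (y+2) # y # ins (t-2) r \<and> goodl r \<and> okins (t-2) r \<and> 3 \<le> t \<and> (r \<noteq> [] \<longrightarrow> hd r + 3 \<le> y))
      \<and> (y = y2 + 2 \<longrightarrow> ins t (y#y2#r) = y # y # ins (t-2) r \<and> goodl r \<and> okins (t-2) r \<and> 3 \<le> t \<and> t < y \<and> (r \<noteq> [] \<longrightarrow> hd r + 3 \<le> y))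
      \<and> (y \<noteq> y2 \<and> y \<noteq> y2 + 2 \<longrightarrow> ins t (y#y2#r) = y # ins t (y2 # r) \<and> goodl (y2 # r) \<and> okins t (y2 # r) \<and> t < y)
      \<and> even y \<and> odd t \<and> t \<le> y + 1"
proof -
  note P = pass_facts[OF g ok stop]
  have Vt: "V (y # y2 # r) < int t" using ok by (simp add: okins_def)
  have yev: "even y" and ot: "odd t" and tle: "t \<le> y + 1" using P by blast+
  have gr: "goodl r" using g goodl_tl2 by blast
  have gr2: "goodl (y2 # r)" using g goodl_tl by blast
  have hr: "r \<noteq> [] \<longrightarrow> hd r + 3 \<le> y" using g yev by (cases r) auto
  have c1: "y = y2 \<longrightarrow> ins t (y # y2 # r) = (y+2) # y # ins (t-2) r \<and> goodl r \<and> okins (t-2) r \<and> 3 \<le> t \<and> (r \<noteq> [] \<longrightarrow> hd r + 3 \<le> y)"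
  proof
    assume e: "y = y2"
    have Q: "V (y#y2#r) = V r + 2" "3 \<le> t" using P e by blast+
    show "ins t (y # y2 # r) = (y+2) # y # ins (t-2) r \<and> goodl r \<and> okins (t-2) r \<and> 3 \<le> t \<and> (r \<noteq> [] \<longrightarrow> hd r + 3 \<le> y)"
      using stop e gr Q Vt ot okins_m2 hr by auto
  qed
  have c2: "y = y2 + 2 \<longrightarrow> ins t (y#y2#r) = y # y # ins (t-2) r \<and> goodl r \<and> okins (t-2) r \<and> 3 \<le> t \<and> t < y \<and> (r \<noteq> [] \<longrightarrow> hd r + 3 \<le> y)"
  proof
    assume e: "y = y2 + 2"
    have Q: "V (y#y2#r) = V r + 2" "3 \<le> t" "t + 1 \<le> y" using P e by blast+
    show "ins t (y#y2#r) = y # y # ins (t-2) r \<and> goodl r \<and> okins (t-2) r \<and> 3 \<le> t \<and> t < y \<and> (r \<noteq> [] \<longrightarrow> hd r + 3 \<le> y)"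
      using stop e gr Q Vt ot okins_m2 hr by auto
  qed
  have c3: "y \<noteq> y2 \<and> y \<noteq> y2 + 2 \<longrightarrow> ins t (y#y2#r) = y # ins t (y2 # r) \<and> goodl (y2 # r) \<and> okins t (y2 # r) \<and> t < y"
  proof
    assume e: "y \<noteq> y2 \<and> y \<noteq> y2 + 2"
    have Q: "V (y # y2 # r) = V (y2 # r)" "t + 1 \<le> y" using P e by blast+
    show "ins t (y#y2#r) = y # ins t (y2 # r) \<and> goodl (y2 # r) \<and> okins t (y2 # r) \<and> t < y"
      using stop e gr2 Q Vt ot by (auto simp: okins_def)
  qed
  show ?thesis using c1 c2 c3 yev ot tle by blast
qed

lemma ins_single:
  assumes "goodl [y]" "okins t [y]"
  shows "ins t [y] = (if y < t then [t, y] else [y, t]) \<and> (\<not> y < t \<longrightarrow> even y \<and> t < y)"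
proof -
  have "\<not> y < t \<Longrightarrow> even y"
  proof (rule ccontr)
    assume "\<not> y < t" "\<not> even y"
    then have "V [y] = int y" by simp
    then show False using assms(2) \<open>\<not> y < t\<close> by (simp add: okins_def)
  qed
  moreover have "odd t" using assms(2) by (simp add: okins_def)
  moreover have "\<not> y < t \<Longrightarrow> even y \<Longrightarrow> odd t \<Longrightarrow> t < y" by (cases "t = y") auto
  ultimately show ?thesis by auto
qed

lemma del_ins: "goodl r \<Longrightarrow> okins t r \<Longrightarrow> del (ins t r) = (t, r)"
proof (induction t r rule: ins.induct)
  case (1 t)
  then show ?case by (simp add: okins_def)
next
  case (2 t y)
  then show ?case using ins_single[OF "2.prems"] by (auto simp: okins_def comb_def)
next
  case (3 t y y2 r)
  show ?case
  proof (cases "y < t \<and> \<not> (y2 = y \<and> y + 1 = t)")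
    case True
    then show ?thesis using "3.prems" by (simp add: okins_def)
  next
    case stop: False
    note P = ins_pass[OF "3.prems" stop]
    show ?thesis
    proof (cases "y = y2")
      case True
      have Q: "ins t (y # y2 # r) = (y+2) # y # ins (t-2) r" "goodl r" "okins (t-2) r" "3 \<le> t" "r \<noteq> [] \<longrightarrow> hd r + 3 \<le> y"
        using P True by blast+
      have IH: "del (ins (t-2) r) = (t-2, r)" using "3.IH"(1)[OF stop True Q(2) Q(3)] .
      have d1: "del (y # ins (t-2) r) = (t-2, y # r)" using IH Q(5) P by (auto simp: comb_def)
      have "del ((y+2) # y # ins (t-2) r) = (t, y # y # r)" using d1 Q(4) P by (auto simp: comb_def)
      then show ?thesis using Q(1) True by simp
    next
      case ne: False
      show ?thesis
      proof (cases "y = y2 + 2")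
        case True
        have Q: "ins t (y # y2 # r) = y # y # ins (t-2) r" "goodl r" "okins (t-2) r" "3 \<le> t" "r \<noteq> [] \<longrightarrow> hd r + 3 \<le> y"
          using P True by blast+
        have IH: "del (ins (t-2) r) = (t-2, r)" using "3.IH"(2)[OF stop ne True Q(2) Q(3)] .
        have d1: "del (y # ins (t-2) r) = (t-2, y # r)" using IH Q(5) P by (auto simp: comb_def)
        have "del (y # y # ins (t-2) r) = (t, y # y2 # r)" using d1 Q(4) P True by (auto simp: comb_def)
        then show ?thesis using Q(1) by simp
      next
        case False
        have Q: "ins t (y # y2 # r) = y # ins t (y2 # r)" "goodl (y2 # r)" "okins t (y2 # r)"
          using P ne False by blast+
        have IH: "del (ins t (y2 # r)) = (t, y2 # r)" using "3.IH"(3)[OF stop ne False Q(2) Q(3)] .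
        have "del (y # ins t (y2 # r)) = (t, y # y2 # r)" using IH P ne False by (auto simp: comb_def)
        then show ?thesis using Q(1) by simp
      qed
    qed
  qed
qed


lemma ins_len: "length (ins t r) = Suc (length r)"
  by (induction t r rule: ins.induct) auto

fun domi :: "nat list \<Rightarrow> nat list \<Rightarrow> bool" where
  "domi [] s = True"
| "domi (a # r) [] = False"
| "domi (a # r) (b # s) = (a \<le> b \<and> domi r s)"

lemma dom_refl: "domi r r"
  by (induction r) auto

lemma dom_cons: "goodl r \<Longrightarrow> (r = [] \<or> hd r \<le> x) \<Longrightarrow> domi r (x # r)"
proof (induction r arbitrary: x)
  case (Cons a r)
  have "goodl r" using Cons.prems(1) goodl_tl by blast
  moreover have "r = [] \<or> hd r \<le> a" using Cons.prems(1) goodl_le by (cases r) auto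
  ultimately show ?case using Cons by auto
qed simp

lemma ins_facts:
  "goodl r \<Longrightarrow> okins t r \<Longrightarrow> t \<le> hd (ins t r) \<and> domi r (ins t r) \<and> sum_list (ins t r) = t + sum_list r
    \<and> length (filter odd (ins t r)) = Suc (length (filter odd r))"
proof (induction t r rule: ins.induct)
  case (1 t)
  then show ?case by (simp add: okins_def)
next
  case (2 t y)
  then show ?case using ins_single[OF "2.prems"] by (auto simp: okins_def)
next
  case (3 t y y2 r)
  show ?case
  proof (cases "y < t \<and> \<not> (y2 = y \<and> y + 1 = t)")
    case True
    have "domi (y # y2 # r) (t # y # y2 # r)" using dom_cons[OF "3.prems"(1)] True by auto
    then show ?thesis using "3.prems" True by (simp add: okins_def)
  next
    case stop: False
    note P = ins_pass[OF "3.prems" stop]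
    have yev: "even y" and ot: "odd t" and tle: "t \<le> y + 1" using P by blast+
    show ?thesis
    proof (cases "y = y2")
      case True
      have Q: "ins t (y # y2 # r) = (y+2) # y # ins (t-2) r" "goodl r" "okins (t-2) r" "3 \<le> t"
        using P True by blast+
      have IH: "t-2 \<le> hd (ins (t-2) r) \<and> domi r (ins (t-2) r) \<and> sum_list (ins (t-2) r) = (t-2) + sum_list r
    \<and> length (filter odd (ins (t-2) r)) = Suc (length (filter odd r))" using "3.IH"(1)[OF stop True Q(2) Q(3)] .
      show ?thesis using Q(1) Q(4) IH True yev tle by auto
    next
      case ne: False
      show ?thesis
      proof (cases "y = y2 + 2")
        case True
        have Q: "ins t (y # y2 # r) = y # y # ins (t-2) r" "goodl r" "okins (t-2) r" "3 \<le> t" "t < y"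
          using P True by blast+
        have IH: "t-2 \<le> hd (ins (t-2) r) \<and> domi r (ins (t-2) r) \<and> sum_list (ins (t-2) r) = (t-2) + sum_list r
    \<and> length (filter odd (ins (t-2) r)) = Suc (length (filter odd r))" using "3.IH"(2)[OF stop ne True Q(2) Q(3)] .
        show ?thesis using Q IH True yev by auto
      next
        case False
        have Q: "ins t (y # y2 # r) = y # ins t (y2 # r)" "goodl (y2 # r)" "okins t (y2 # r)" "t < y"
          using P ne False by blast+
        have IH: "t \<le> hd (ins t (y2 # r)) \<and> domi (y2 # r) (ins t (y2 # r)) \<and> sum_list (ins t (y2 # r)) = t + sum_list (y2 # r)
    \<and> length (filter odd (ins t (y2 # r))) = Suc (length (filter odd (y2 # r)))" using "3.IH"(3)[OF stop ne False Q(2) Q(3)] .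
        show ?thesis using Q IH yev by auto
      qed
    qed
  qed
qed




lemma V_lt: "goodl (x # w) \<Longrightarrow> V w < int x"
proof (induction w arbitrary: x rule: length_induct)
  case (1 w)
  show ?case
  proof (cases w)
    case Nil
    then show ?thesis by simp
  next
    case (Cons a w1)
    have ax: "a \<le> x" "a = x \<longrightarrow> even x" using goodl_le "1.prems" Cons by blast+
    have ax2: "odd a \<Longrightarrow> a < x" using ax by (cases "a = x") auto
    show ?thesis
    proof (cases w1)
      case Nil
      then show ?thesis using Cons ax ax2 by auto
    next
      case (Cons b r)
      note w = \<open>w = a # w1\<close> Cons
      have g1: "goodl (a # b # r)" using "1.prems" w goodl_tl by blast
      show ?thesis
      proof (cases "odd a")
        case True
        then show ?thesis using w ax2 by auto
      next
        case ev: False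
        show ?thesis
        proof (cases "even b \<and> a \<le> b + 2")
          case True
          have bx: "b + 2 \<le> x" using "1.prems" w by simp
          have "V r < int b"
          proof (cases r)
            case Nil
            then show ?thesis by simp
          next
            case (Cons c r')
            have "goodl (b # r)" using g1 goodl_tl by blast
            then show ?thesis using "1.IH" w by auto
          qed
          then show ?thesis using w ev True bx by simp
        next
          case False
          have "V (b # r) < int a" using "1.IH" w g1 by auto
          then show ?thesis using w ev False ax by auto
        qed
      qed
    qed
  qed
qed


lemma V_pair: "even a \<Longrightarrow> even b \<Longrightarrow> a \<le> b + 2 \<Longrightarrow> V (a # b # r) = V r + 2"
  by simp

lemma ins_nostop: "\<not> y < t \<Longrightarrow> ins t (y # y2 # r) = (if y = y2 then (y+2) # y # ins (t-2) r
       else if y = y2 + 2 then y # y # ins (t-2) r else y # ins t (y2 # r))"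
  by simp

lemma ins_blocked: "y + 1 = t \<Longrightarrow> ins t (y # y # r) = (y+2) # y # ins (t-2) r"
  by simp

lemma step_iii:
  assumes g: "goodl r" and ok: "okins t r" and gx: "goodl (x # ins t r)" and ex: "even x"
    and tx: "t < x" and n1: "\<not> (r \<noteq> [] \<and> hd r = x)" and n2: "\<not> (r \<noteq> [] \<and> hd r + 2 = x)"
  shows "goodl (x # r) \<and> okins t (x # r) \<and> ins t (x # r) = x # ins t r"
proof (cases r)
  case Nil
  then show ?thesis using ok tx ex by (auto simp: okins_def)
next
  case (Cons a r1)
  have IF: "t \<le> hd (ins t r)" "domi r (ins t r)" using ins_facts[OF g ok] by blast+
  obtain w0 ws where w: "ins t r = w0 # ws" using ins_ne by (cases "ins t r") auto
  have w0x: "w0 \<le> x" using goodl_le[of x w0 ws] gx w by simp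
  have ax: "a \<le> x" using IF(2) w Cons w0x by simp
  have a_ne: "a \<noteq> x" "a + 2 \<noteq> x" using n1 n2 Cons by auto
  have gxr: "goodl (x # r)"
  proof (cases r1)
    case Nil
    then show ?thesis using Cons ax g ex by auto
  next
    case (Cons b r2)
    obtain w1 ws' where w1: "ws = w1 # ws'" using ins_len[of t r] w \<open>r = a # r1\<close> Cons by (cases ws) auto
    have "b \<le> w1" using IF(2) w w1 \<open>r = a # r1\<close> Cons by simp
    moreover have "w1 + 3 \<le> x" using gx w w1 ex by simp
    ultimately show ?thesis using \<open>r = a # r1\<close> Cons ax g ex by auto
  qed
  have Vx: "V (x # r) = V r"
  proof -
    have "\<not> (even a \<and> x \<le> a + 2)" using a_ne ax ex by presburger
    then show ?thesis using Cons ex by (cases r1) auto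
  qed
  have "ins t (x # r) = x # ins t r"
  proof (cases r1)
    case Nil
    then show ?thesis using Cons tx a_ne by simp
  next
    case (Cons b r2)
    then show ?thesis using \<open>r = a # r1\<close> tx a_ne by simp
  qed
  then show ?thesis using gxr Vx ok by (simp add: okins_def)
qed


lemma step_i:
  assumes g: "goodl (x # r1)" and ok: "okins t (x # r1)" and gx: "goodl (x # ins t (x # r1))" and ex: "even x"
    and tx: "t < x"
  shows "goodl (x # (x-2) # r1) \<and> okins (t+2) (x # (x-2) # r1) \<and> ins (t+2) (x # (x-2) # r1) = x # ins t (x # r1)"
proof (cases r1)
  case Nil
  have i: "ins t [x] = [x, t]" using tx by simp
  then have t3: "t + 3 \<le> x" using gx Nil ex by simp
  have ot: "odd t" using ok by (simp add: okins_def)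
  have "V [x, x-2] = 1" using ex t3 by simp
  moreover have "ins (t+2) [x, x-2] = [x, x, t]" using t3 by simp
  ultimately show ?thesis using Nil i t3 ot ex by (simp add: okins_def)
next
  case (Cons y2 r2)
  have stop: "\<not> (x < t \<and> \<not> (y2 = x \<and> x + 1 = t))" using tx by auto
  note P = ins_pass[OF g[unfolded Cons] ok[unfolded Cons] stop]
  have ne1: "x \<noteq> y2"
  proof
    assume "x = y2"
    then have "ins t (x # y2 # r2) = (x+2) # x # ins (t-2) r2" using P by blast
    then show False using gx Cons goodl_le[of x "x+2"] by auto
  qed
  have ne2: "x \<noteq> y2 + 2"
  proof
    assume "x = y2 + 2"
    then have "ins t (x # y2 # r2) = x # x # ins (t-2) r2" using P by blast
    then show False using gx Cons by auto
  qed
  have Q: "ins t (x # y2 # r2) = x # ins t (y2 # r2)" "goodl (y2 # r2)" "okins t (y2 # r2)"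
    using P ne1 ne2 by blast+
  obtain u0 u1 us where u: "ins t (y2 # r2) = u0 # u1 # us"
    using ins_len[of t "y2 # r2"] by (cases "ins t (y2 # r2)"; cases "tl (ins t (y2 # r2))") auto
  have gxx: "goodl (x # x # u0 # u1 # us)" using gx Cons Q(1) u by simp
  have u0x: "u0 + 3 \<le> x" and u1x: "u1 + 3 \<le> x" using gxx ex by auto
  have IF: "t \<le> u0" "domi (y2 # r2) (u0 # u1 # us)" using ins_facts[OF Q(2) Q(3)] u by auto
  have y2u: "y2 \<le> u0" using IF(2) by simp
  have ot: "odd t" and Vy: "V (y2 # r2) < int t" using Q(3) by (auto simp: okins_def)
  have r2b: "r2 = [] \<or> hd r2 + 5 \<le> x"
  proof (cases r2)
    case (Cons c r3)
    have cu: "c \<le> u1" using IF(2) Cons by simp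
    have cy: "c \<le> y2" "c = y2 \<longrightarrow> even y2" using Q(2) Cons goodl_le by blast+
    show ?thesis
    proof (rule ccontr)
      assume "\<not> (r2 = [] \<or> hd r2 + 5 \<le> x)"
      then have c4: "x \<le> c + 4" using Cons by simp
      show False
      proof (cases "odd y2")
        case True
        then have "V (y2 # r2) = int y2" using Cons by simp
        then have "y2 < t" using Vy by simp
        then show False using True c4 cy IF(1) u0x ex ot by presburger
      next
        case False
        then have yc: "y2 = c" "y2 + 4 = x" using c4 cy y2u u0x ex by presburger+
        show False
        proof (cases "y2 < t \<and> \<not> (c = y2 \<and> y2 + 1 = t)")
          case True
          then have "ins t (y2 # c # r3) = t # y2 # c # r3" by simp
          then have "u0 = t" using u Cons by simp
          then show False using True yc u0x ot by presburger
        next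
          case st: False
          have "ins t (y2 # c # r3) = (y2+2) # y2 # ins (t-2) r3" using st yc by auto
          then have "u0 = y2 + 2" using u Cons by simp
          then show False using yc u0x by simp
        qed
      qed
    qed
  qed simp
  have gr': "goodl (x # (x-2) # y2 # r2)"
  proof (cases r2)
    case Nil
    then show ?thesis using y2u u0x Q(2) ex by auto
  next
    case (Cons c r3)
    then show ?thesis using y2u u0x Q(2) ex r2b by auto
  qed
  have x2: "2 \<le> x" "even (x - 2)" using ex u0x by auto
  have V': "V (x # (x-2) # y2 # r2) = V (y2 # r2) + 2" using ex x2 by (intro V_pair) auto
  have i': "ins (t+2) (x # (x-2) # y2 # r2) = x # x # ins t (y2 # r2)" using IF(1) u0x by simp
  show ?thesis using gr' V' i' Vy ot Cons Q(1) by (simp add: okins_def)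
qed


lemma step_ii:
  assumes g: "goodl (a # r1)" and ok: "okins t (a # r1)" and gx: "goodl ((a+2) # ins t (a # r1))" and ea: "even a"
    and tx: "t < a + 2"
  shows "goodl (a # a # r1) \<and> okins (t+2) (a # a # r1) \<and> ins (t+2) (a # a # r1) = (a+2) # ins t (a # r1)"
proof -
  have ot: "odd t" using ok by (simp add: okins_def)
  have apos: "0 < a" using g goodl_pos by blast
  show ?thesis
  proof (cases r1)
    case Nil
    show ?thesis
    proof (cases "a < t")
      case True
      then have "t = a + 1" using tx by simp
      then show ?thesis using gx Nil True ea by simp
    next
      case False
      then have ta: "t < a" using ea ot by (cases "t = a") auto
      have "ins (t+2) [a, a] = [a+2, a, t]" using ta by (cases "a < t + 2") auto
      then show ?thesis using Nil ta ea ot apos by (simp add: okins_def)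
    qed
  next
    case (Cons y2 r2)
    have ns: "\<not> (a < t \<and> \<not> (y2 = a \<and> a + 1 = t))"
    proof
      assume st: "a < t \<and> \<not> (y2 = a \<and> a + 1 = t)"
      then have "ins t (a # y2 # r2) = t # a # y2 # r2" by simp
      moreover have "t = a + 1" using st tx by simp
      ultimately show False using gx Cons ea by simp
    qed
    note P = ins_pass[OF g[unfolded Cons] ok[unfolded Cons] ns]
    have ne1: "a \<noteq> y2"
    proof
      assume "a = y2"
      then have "ins t (a # y2 # r2) = (a+2) # a # ins (t-2) r2" using P by blast
      then show False using gx Cons ea by simp
    qed
    have ne2: "a \<noteq> y2 + 2"
    proof
      assume "a = y2 + 2"
      then have "ins t (a # y2 # r2) = a # a # ins (t-2) r2" using P by blast
      then show False using gx Cons ea by simp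
    qed
    have Q: "ins t (a # y2 # r2) = a # ins t (y2 # r2)" "goodl (y2 # r2)" "okins t (y2 # r2)" "t < a"
      using P ne1 ne2 by blast+
    have Vy: "V (y2 # r2) < int t" using Q(3) by (simp add: okins_def)
    have ya: "y2 \<le> a" "y2 = a \<longrightarrow> even a" using g Cons goodl_le by blast+
    have y3: "y2 + 3 \<le> a"
    proof (cases "odd y2")
      case True
      then have "V (y2 # r2) = int y2" by (cases r2) auto
      then have "y2 < t" using Vy by simp
      then show ?thesis using True Q(4) ot ea by presburger
    next
      case False
      then show ?thesis using ya ne1 ne2 ea by presburger
    qed
    have gr': "goodl (a # a # y2 # r2)" using g Cons ea y3 by simp
    have V': "V (a # a # y2 # r2) = V (y2 # r2) + 2" using ea by (intro V_pair) auto
    have i': "ins (t+2) (a # a # y2 # r2) = (a+2) # a # ins t (y2 # r2)"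
    proof (cases "a < t + 2")
      case True
      then have "a + 1 = t + 2" using Q(4) ot ea by presburger
      then show ?thesis by simp
    next
      case False
      then show ?thesis by simp
    qed
    show ?thesis using gr' V' i' Vy ot Cons Q(1) by (simp add: okins_def)
  qed
qed

lemma comb_1: "r \<noteq> [] \<Longrightarrow> hd r = x \<Longrightarrow> comb x (t,r) = (t+2, x # (x-2) # tl r)"
  by (simp add: comb_def)
lemma comb_2: "r \<noteq> [] \<Longrightarrow> hd r \<noteq> x \<Longrightarrow> hd r + 2 = x \<Longrightarrow> comb x (t, r) = (t+2, (x-2) # r)"
  by (simp add: comb_def)
lemma comb_3: "\<not>(r \<noteq> [] \<and> hd r = x) \<Longrightarrow> \<not>(r \<noteq> [] \<and> hd r + 2 = x) \<Longrightarrow> comb x (t, r) = (t, x # r)"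
  by (simp add: comb_def)

lemma step:
  assumes g: "goodl r" and ok: "okins t r" and gx: "goodl (x # ins t r)" and ex: "even x"
  shows "goodl (snd (comb x (t, r))) \<and> okins (fst (comb x (t, r))) (snd (comb x (t, r)))
     \<and> ins (fst (comb x (t, r))) (snd (comb x (t, r))) = x # ins t r"
proof -
  have Vw: "V (ins t r) = int t" using V_ins[OF g ok] by blast
  have tx: "t < x" using V_lt[OF gx] Vw by simp
  show ?thesis
  proof (cases "r \<noteq> [] \<and> hd r = x")
    case True
    then obtain r1 where r: "r = x # r1" by (cases r) auto
    show ?thesis using step_i[OF g[unfolded r] ok[unfolded r] gx[unfolded r] ex tx] r comb_1[of r x t]
      by simp
  next
    case n1: False
    show ?thesis
    proof (cases "r \<noteq> [] \<and> hd r + 2 = x")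
      case True
      then obtain a r1 where r: "r = a # r1" and ax: "x = a + 2" by (cases r) auto
      have ea: "even a" using ex ax by simp
      have "goodl (a # a # r1) \<and> okins (t+2) (a # a # r1) \<and> ins (t+2) (a # a # r1) = (a+2) # ins t (a # r1)"
        using step_ii[OF g[unfolded r] ok[unfolded r] _ ea] gx r ax tx by simp
      moreover have "comb x (t, r) = (t+2, a # a # r1)" using comb_2[of r x t] r ax by simp
      ultimately show ?thesis using ax r by (simp del: ins.simps)
    next
      case False
      show ?thesis using step_iii[OF g ok gx ex tx n1 False] comb_3[OF n1 False] by simp
    qed
  qed
qed




lemma ins_top: "goodl (x # w) \<Longrightarrow> odd x \<Longrightarrow> ins x w = x # w"
proof (cases w rule: goodl.cases)
  case (3 a b)
  assume "goodl (x # w)" "odd x"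
  then show ?thesis using 3 by (cases "a = x") auto
next
  case (4 a b c r)
  assume g: "goodl (x # w)" and o: "odd x"
  then have "a \<le> x" "a \<noteq> x" using 4 by auto
  moreover have "\<not> (b = a \<and> a + 1 = x)" using g 4 by auto
  ultimately show ?thesis using 4 by simp
next
  case (2 a)
  assume "goodl (x # w)" "odd x"
  then show ?thesis using 2 by (cases "a = x") auto
qed simp

lemma del_good:
  "goodl w \<Longrightarrow> (\<exists>x\<in>set w. odd x) \<Longrightarrow>
    goodl (snd (del w)) \<and> okins (fst (del w)) (snd (del w)) \<and> ins (fst (del w)) (snd (del w)) = w"
proof (induction w)
  case Nil
  then show ?case by simp
next
  case (Cons x w1)
  show ?case
  proof (cases "odd x")
    case True
    have "okins x w1" using V_lt[OF Cons.prems(1)] True by (simp add: okins_def)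
    then show ?thesis using True Cons.prems(1) goodl_tl ins_top by auto
  next
    case False
    then have ex: "\<exists>x\<in>set w1. odd x" using Cons.prems(2) by auto
    have g1: "goodl w1" using Cons.prems(1) goodl_tl by blast
    obtain t r where d: "del w1 = (t, r)" by (cases "del w1")
    have IH: "goodl r" "okins t r" "ins t r = w1" using Cons.IH[OF g1 ex] d by auto
    have "goodl (x # ins t r)" using Cons.prems(1) IH(3) by simp
    from step[OF IH(1) IH(2) this] False d IH(3) show ?thesis by simp
  qed
qed

fun N2g :: "nat list \<Rightarrow> nat" where
  "N2g (x # y # r) = (if x \<le> y + 2 then Suc (N2g r) else N2g (y # r))"
| "N2g _ = 0"

lemma V_even: "\<forall>x\<in>set l. even x \<Longrightarrow> V l = 2 * int (N2g l) - 1"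
  by (induction l rule: N2g.induct) auto

definition Phi :: "nat list \<Rightarrow> nat list \<Rightarrow> nat list" where
  "Phi l z = foldr ins z l"

fun zok :: "nat \<Rightarrow> nat list \<Rightarrow> bool" where
  "zok n [] = True"
| "zok n [a] = (odd a \<and> 2 * n + 1 \<le> a)"
| "zok n (a # b # zs) = (odd a \<and> b < a \<and> zok n (b # zs))"

lemma Phi_props:
  assumes g: "goodl l" and e: "\<forall>x\<in>set l. even x"
  shows "zok (N2g l) z \<Longrightarrow> goodl (Phi l z) \<and> V (Phi l z) = (case z of [] \<Rightarrow> 2 * int (N2g l) - 1 | a # _ \<Rightarrow> int a)
     \<and> length (filter odd (Phi l z)) = length z \<and> sum_list (Phi l z) = sum_list l + sum_list z
     \<and> length (Phi l z) = length l + length z"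
proof (induction z)
  case Nil
  have "length (filter odd l) = 0" using e by (simp add: filter_empty_conv)
  then show ?case using g e V_even[OF e] by (simp add: Phi_def)
next
  case (Cons a zs)
  have zs: "zok (N2g l) zs" using Cons.prems by (cases zs) auto
  note IH = Cons.IH[OF zs]
  have oa: "odd a" using Cons.prems by (cases zs) auto
  have "V (Phi l zs) < int a"
  proof (cases zs)
    case Nil
    then show ?thesis using IH Cons.prems by simp
  next
    case (Cons b zs')
    then show ?thesis using IH \<open>zok (N2g l) (a # zs)\<close> by simp
  qed
  then have ok: "okins a (Phi l zs)" using oa by (simp add: okins_def)
  have gP: "goodl (Phi l zs)" using IH by blast
  have P: "Phi l (a # zs) = ins a (Phi l zs)" by (simp add: Phi_def)
  have "V (ins a (Phi l zs)) = int a" using V_ins[OF gP ok] by blast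
  moreover have "goodl (ins a (Phi l zs))" using ins_good[OF gP ok] .
  moreover have "length (filter odd (ins a (Phi l zs))) = Suc (length (filter odd (Phi l zs)))"
    "sum_list (ins a (Phi l zs)) = a + sum_list (Phi l zs)" using ins_facts[OF gP ok] by blast+
  moreover have "length (ins a (Phi l zs)) = Suc (length (Phi l zs))" by (rule ins_len)
  ultimately show ?case using P IH by simp
qed

fun psi :: "nat \<Rightarrow> nat list \<Rightarrow> nat list \<times> nat list" where
  "psi 0 w = (w, [])"
| "psi (Suc n) w = (let d = del w; p = psi n (snd d) in (fst p, fst d # snd p))"

lemma psi_Phi:
  assumes g: "goodl l" and e: "\<forall>x\<in>set l. even x"
  shows "zok (N2g l) z \<Longrightarrow> psi (length z) (Phi l z) = (l, z)"
proof (induction z)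
  case Nil
  then show ?case by (simp add: Phi_def)
next
  case (Cons a zs)
  have zs: "zok (N2g l) zs" using Cons.prems by (cases zs) auto
  note IH = Cons.IH[OF zs]
  note PP = Phi_props[OF g e zs]
  have oa: "odd a" using Cons.prems by (cases zs) auto
  have "V (Phi l zs) < int a"
  proof (cases zs)
    case Nil
    then show ?thesis using PP Cons.prems by simp
  next
    case (Cons b zs')
    then show ?thesis using PP \<open>zok (N2g l) (a # zs)\<close> by simp
  qed
  then have ok: "okins a (Phi l zs)" using oa by (simp add: okins_def)
  have gP: "goodl (Phi l zs)" using PP by blast
  have "del (Phi l (a # zs)) = (a, Phi l zs)" using del_ins[OF gP ok] by (simp add: Phi_def)
  then show ?case using IH by simp
qed

lemma Phi_psi:
  "goodl w \<Longrightarrow> length (filter odd w) = n \<Longrightarrow> psi n w = (l, z) \<Longrightarrow>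
    goodl l \<and> (\<forall>x\<in>set l. even x) \<and> zok (N2g l) z \<and> Phi l z = w \<and> length z = n"
proof (induction n arbitrary: w l z)
  case 0
  then show ?case by (auto simp: Phi_def filter_empty_conv)
next
  case (Suc n)
  have ex: "\<exists>x\<in>set w. odd x" using Suc.prems(2) by (metis filter_False length_0_conv nat.distinct(1))
  obtain t r where d: "del w = (t, r)" by (cases "del w")
  have D: "goodl r" "okins t r" "ins t r = w" using del_good[OF Suc.prems(1) ex] d by auto
  have cr: "length (filter odd r) = n" using ins_facts[OF D(1) D(2)] D(3) Suc.prems(2) by simp
  obtain l' zs where p: "psi n r = (l', zs)" by (cases "psi n r")
  have IH: "goodl l' \<and> (\<forall>x\<in>set l'. even x) \<and> zok (N2g l') zs \<and> Phi l' zs = r \<and> length zs = n"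
    using Suc.IH[OF D(1) cr p] .
  have lz: "l = l'" "z = t # zs" using Suc.prems(3) d p by auto
  have ot: "odd t" and Vt: "V r < int t" using D(2) by (auto simp: okins_def)
  note PP = Phi_props[of l' zs]
  have zz: "zok (N2g l') (t # zs)"
  proof (cases zs)
    case Nil
    then have "V r = 2 * int (N2g l') - 1" using PP IH by auto
    then show ?thesis using Nil ot Vt by simp presburger
  next
    case (Cons b zs')
    then have "V r = int b" using PP IH by auto
    then show ?thesis using Cons ot Vt IH by simp
  qed
  have "Phi l' (t # zs) = w" using IH D(3) by (simp add: Phi_def)
  then show ?case using IH lz zz by simp
qed




lemma goodl_all_le: "goodl (a # p) \<Longrightarrow> \<forall>x\<in>set p. x \<le> a"
proof (induction p arbitrary: a)
  case (Cons b r)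
  have "b \<le> a" using goodl_le Cons.prems by blast
  moreover have "goodl (b # r)" using Cons.prems by (rule goodl_tl)
  then have "\<forall>x\<in>set r. x \<le> b" using Cons.IH by blast
  ultimately show ?case by auto
qed simp

lemma goodl_sorted: "goodl p \<Longrightarrow> sorted_wrt (\<ge>) p"
proof (induction p)
  case (Cons a p)
  have "goodl p" using Cons.prems by (rule goodl_tl)
  then have "sorted_wrt (\<ge>) p" using Cons.IH by blast
  moreover have "\<forall>x\<in>set p. x \<le> a" using goodl_all_le[OF Cons.prems] .
  ultimately show ?case by simp
qed simp

lemma goodl_allpos: "goodl p \<Longrightarrow> \<forall>x\<in>set p. 0 < x"
proof (induction p)
  case (Cons a p)
  have "goodl p" using Cons.prems by (rule goodl_tl)
  then have "\<forall>x\<in>set p. 0 < x" using Cons.IH by blast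
  moreover have "0 < a" using goodl_pos[OF Cons.prems] .
  ultimately show ?case by simp
qed simp

lemma goodl_drop: "goodl p \<Longrightarrow> goodl (drop i p)"
proof (induction i arbitrary: p)
  case (Suc i)
  show ?case
  proof (cases p)
    case (Cons a p')
    have "goodl p'" using Suc.prems Cons by (simp add: goodl_tl[of a p'])
    then show ?thesis using Suc.IH Cons by simp
  qed simp
qed simp

lemma goodl_filter: "goodl p \<Longrightarrow> length (filter (\<lambda>x. x \<le> 2) p) \<le> 2"
proof (induction p rule: goodl.induct)
  case (4 a b c r)
  have "0 < c" using goodl_allpos[OF "4.prems"] by simp
  then have "\<not> a \<le> 2" using "4.prems" by simp
  then show ?case using "4.IH" "4.prems" by simp
qed auto

lemma drop_nth3: "i + 2 < length p \<Longrightarrow> drop i p = p ! i # p ! (i+1) # p ! (i+2) # drop (i+3) p"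
proof -
  assume a: "i + 2 < length p"
  have 1: "drop i p = p ! i # drop (Suc i) p" using Cons_nth_drop_Suc[of i p] a by simp
  have 2: "drop (Suc i) p = p ! (Suc i) # drop (Suc (Suc i)) p" using Cons_nth_drop_Suc[of "Suc i" p] a by simp
  have 3: "drop (Suc (Suc i)) p = p ! (Suc (Suc i)) # drop (Suc (Suc (Suc i))) p" using Cons_nth_drop_Suc[of "Suc (Suc i)" p] a by simp
  show ?thesis using 1 2 3 by (simp add: numeral_3_eq_3 numeral_2_eq_2)
qed

lemma drop_nth2: "i + 1 < length p \<Longrightarrow> drop i p = p ! i # p ! (i+1) # drop (i+2) p"
proof -
  assume a: "i + 1 < length p"
  have 1: "drop i p = p ! i # drop (Suc i) p" using Cons_nth_drop_Suc[of i p] a by simp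
  have 2: "drop (Suc i) p = p ! (Suc i) # drop (Suc (Suc i)) p" using Cons_nth_drop_Suc[of "Suc i" p] a by simp
  show ?thesis using 1 2 by (simp add: numeral_2_eq_2)
qed

lemma goodl_C33: "goodl p \<Longrightarrow> p \<in> C33"
proof -
  assume g: "goodl p"
  have s: "sorted_wrt (\<ge>) p" using goodl_sorted[OF g] .
  have part: "is_partition p" using s goodl_allpos[OF g] by (simp add: is_partition_def)
  have adj: "even (p ! i)" if "i + 1 < length p" "p ! i = p ! (i+1)" for i
  proof -
    have "goodl (p ! i # p ! (i+1) # drop (i+2) p)" using goodl_drop[OF g, of i] drop_nth2[OF that(1)] by simp
    then show ?thesis using goodl_le that(2) by blast
  qed
  have rep: "even (p ! i)" if "i < j" "j < length p" "p ! i = p ! j" for i j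
  proof -
    have il: "i + 1 < length p" using that by simp
    have "p ! (i+1) \<le> p ! i" using s il unfolding sorted_wrt_iff_nth_less by auto
    moreover have "p ! j \<le> p ! (i+1)"
    proof (cases "j = i + 1")
      case False
      then have "i + 1 < j" using that by simp
      then show ?thesis using s that(2) unfolding sorted_wrt_iff_nth_less by blast
    qed simp
    ultimately have "p ! i = p ! (i+1)" using that(3) by simp
    then show ?thesis using adj that by simp
  qed
  have tri: "p ! (i + 2) + 2 \<le> p ! i \<and> (even (p ! i) \<longrightarrow> p ! (i + 2) + 2 < p ! i)" if "i + 2 < length p" for i
  proof -
    have "goodl (p ! i # p ! (i+1) # p ! (i+2) # drop (i+3) p)" using goodl_drop[OF g, of i] drop_nth3[OF that] by simp
    then have "p ! (i+2) + 2 \<le> p ! i" "even (p ! i) \<longrightarrow> p ! (i+2) + 3 \<le> p ! i" by simp_all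
    then show ?thesis by auto
  qed
  show ?thesis unfolding C33_def using part rep tri goodl_filter[OF g] by blast
qed

lemma C33_parts:
  assumes "p \<in> C33"
  shows "is_partition p" "\<And>i j. i < j \<Longrightarrow> j < length p \<Longrightarrow> p ! i = p ! j \<Longrightarrow> even (p ! i)"
    "\<And>i. i + 2 < length p \<Longrightarrow> p ! (i + 2) + 2 \<le> p ! i \<and> (even (p ! i) \<longrightarrow> p ! (i + 2) + 2 < p ! i)"
    "length (filter (\<lambda>x. x \<le> 2) p) \<le> 2"
  using assms unfolding C33_def by blast+

lemma C33_tl: "a # p \<in> C33 \<Longrightarrow> p \<in> C33"
proof -
  assume c: "a # p \<in> C33"
  note C = C33_parts[OF c]
  have part: "is_partition p" using C(1) by (simp add: is_partition_def)
  have rep: "\<forall>i j. i < j \<and> j < length p \<and> p ! i = p ! j \<longrightarrow> even (p ! i)"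
  proof (intro allI impI)
    fix i j assume h: "i < j \<and> j < length p \<and> p ! i = p ! j"
    have "even ((a # p) ! Suc i)" using C(2)[of "Suc i" "Suc j"] h by simp
    then show "even (p ! i)" by simp
  qed
  have tri: "\<forall>i. i + 2 < length p \<longrightarrow> p ! (i + 2) + 2 \<le> p ! i \<and> (even (p ! i) \<longrightarrow> p ! (i + 2) + 2 < p ! i)"
  proof (intro allI impI)
    fix i assume h: "i + 2 < length p"
    have "(a # p) ! (Suc i + 2) + 2 \<le> (a # p) ! Suc i \<and> (even ((a # p) ! Suc i) \<longrightarrow> (a # p) ! (Suc i + 2) + 2 < (a # p) ! Suc i)"
      using C(3)[of "Suc i"] h by simp
    then show "p ! (i + 2) + 2 \<le> p ! i \<and> (even (p ! i) \<longrightarrow> p ! (i + 2) + 2 < p ! i)" by simp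
  qed
  have "length (filter (\<lambda>x. x \<le> 2) p) \<le> length (filter (\<lambda>x. x \<le> 2) (a # p))" by simp
  then have "length (filter (\<lambda>x. x \<le> 2) p) \<le> 2" using C(4) by simp
  then show ?thesis unfolding C33_def using part rep tri by blast
qed

lemma C33_goodl: "p \<in> C33 \<Longrightarrow> goodl p"
proof (induction p rule: goodl.induct)
  case (2 a)
  then show ?case by (simp add: C33_def is_partition_def)
next
  case (3 a b)
  note C = C33_parts[OF "3.prems"]
  have "b \<le> a" "0 < b" using C(1) by (auto simp: is_partition_def)
  moreover have "a = b \<longrightarrow> even a" using C(2)[of 0 1] by simp
  ultimately show ?case by simp
next
  case (4 a b c r)
  note C = C33_parts[OF "4.prems"]
  have t: "b # c # r \<in> C33" using C33_tl "4.prems" by blast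
  have "b \<le> a" using C(1) by (auto simp: is_partition_def)
  moreover have "a = b \<longrightarrow> even a" using C(2)[of 0 1] by simp
  moreover have "c + 2 \<le> a \<and> (even a \<longrightarrow> c + 2 < a)" using C(3)[of 0] by simp
  ultimately show ?case using "4.IH"[OF t] by auto
qed simp

lemma C33_iff: "p \<in> C33 \<longleftrightarrow> goodl p"
  using C33_goodl goodl_C33 by blast




lemma gg_len: "length (gg_marks xs) = length xs"
  by (induction xs) (auto simp: Let_def)

lemma least_aux:
  assumes "F = {} \<or> (\<exists>k. F = {k})"
  shows "(LEAST m::nat. 0 < m \<and> m \<notin> F) = (if 1 \<in> F then 2 else 1)"
proof (cases "1 \<in> F")
  case True
  then have F1: "F = {1}" using assms by auto
  show ?thesis unfolding F1 by (rule Least_equality) auto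
next
  case False
  show ?thesis using False by (intro Least_equality) auto
qed

lemma gg_even:
  assumes g: "goodl (x # xs)" and e: "\<forall>v\<in>set (x # xs). even v"
  shows "gg_marks (x # xs) = (if xs \<noteq> [] \<and> x \<le> hd xs + 2 \<and> hd (gg_marks xs) = 1 then 2 else 1) # gg_marks xs"
proof -
  define ms where "ms = gg_marks xs"
  define forb where "forb = {ms ! j | j. j < length xs \<and> x \<le> xs ! j + 2 \<and> (odd x \<longrightarrow> x < xs ! j + 2)}"
  have far: "\<not> x \<le> xs ! j + 2" if j0: "0 < j" and jl: "j < length xs" for j
  proof -
    obtain a xs' where xs1: "xs = a # xs'" using jl by (cases xs) auto
    obtain b r where "xs' = b # r" using j0 jl xs1 by (cases xs') auto
    then have xs: "xs = a # b # r" using xs1 by simp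
    have "xs ! j \<le> b"
    proof -
      have s: "sorted_wrt (\<ge>) xs" using goodl_sorted goodl_tl g by blast
      show ?thesis
      proof (cases "j = 1")
        case False
        then have "1 < j" using that by simp
        then have "xs ! j \<le> xs ! 1" using s that(2) unfolding sorted_wrt_iff_nth_less by blast
        then show ?thesis using xs by simp
      qed (simp add: xs)
    qed
    moreover have "b + 3 \<le> x" using g xs e by simp
    moreover have "even b" "even x" using e xs by auto
    ultimately show ?thesis by presburger
  qed
  have forb_eq: "forb = (if xs \<noteq> [] \<and> x \<le> hd xs + 2 then {hd ms} else {})"
  proof -
    have ex: "even x" using e by simp
    have "forb = {ms ! j | j. j = 0 \<and> j < length xs \<and> x \<le> xs ! j + 2}"
      unfolding forb_def using far ex by (auto; metis gr0I)
    also have "\<dots> = (if xs \<noteq> [] \<and> x \<le> hd xs + 2 then {hd ms} else {})"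
    proof (cases xs)
      case (Cons a l)
      have lm: "length ms = length xs" using gg_len[of xs] by (simp add: ms_def)
      then have "ms \<noteq> []" using Cons by auto
      then have "hd ms = ms ! 0" by (simp add: hd_conv_nth)
      then show ?thesis using Cons by auto
    qed simp
    finally show ?thesis .
  qed
  have "gg_marks (x # xs) = (LEAST m. 0 < m \<and> m \<notin> forb) # ms"
    by (simp add: Let_def ms_def forb_def)
  also have "(LEAST m. 0 < m \<and> m \<notin> forb) = (if 1 \<in> forb then 2 else 1)"
    by (rule least_aux) (simp add: forb_eq)
  finally show ?thesis using forb_eq by (auto simp: ms_def)
qed

lemma N2_Cons:
  assumes "goodl (x # xs)" "\<forall>v\<in>set (x # xs). even v"
  shows "N2 (x # xs) = N2 xs + (if xs \<noteq> [] \<and> x \<le> hd xs + 2 \<and> hd (gg_marks xs) = 1 then 1 else 0)"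
  using gg_even[OF assms] by (simp add: N2_def)

lemma N2_eq:
  "goodl l \<Longrightarrow> \<forall>v\<in>set l. even v \<Longrightarrow> N2 l = N2g l"
proof (induction l rule: N2g.induct)
  case (1 x y r)
  have gyr: "goodl (y # r)" using "1.prems"(1) goodl_tl by blast
  have eyr: "\<forall>v\<in>set (y # r). even v" using "1.prems"(2) by simp
  have gr: "goodl r" using gyr goodl_tl by blast
  have er: "\<forall>v\<in>set r. even v" using eyr by simp
  have N1: "N2 (x # y # r) = N2 (y # r) + (if x \<le> y + 2 \<and> hd (gg_marks (y # r)) = 1 then 1 else 0)"
    using N2_Cons[OF "1.prems"] by simp
  have N3: "N2 (y # r) = N2 r + (if r \<noteq> [] \<and> y \<le> hd r + 2 \<and> hd (gg_marks r) = 1 then 1 else 0)"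
    using N2_Cons[OF gyr eyr] .
  have H: "hd (gg_marks (y # r)) = (if r \<noteq> [] \<and> y \<le> hd r + 2 \<and> hd (gg_marks r) = 1 then 2 else 1)"
    using gg_even[OF gyr eyr] by simp
  show ?case
  proof (cases "x \<le> y + 2")
    case True
    have "N2 r = N2g r" using "1.IH"(1)[OF True gr er] .
    then show ?thesis using True N1 N3 H by auto
  next
    case False
    have "N2 (y # r) = N2g (y # r)" using "1.IH"(2)[OF False gyr eyr] .
    then show ?thesis using False N1 by simp
  qed
next
  case ("2_1")
  then show ?case by (simp add: N2_def)
next
  case ("2_2" v)
  have L: "(LEAST m::nat. 0 < m) = 1" by (rule Least_equality) auto
  have "gg_marks [v] = [1]" using L by (simp add: Let_def)
  then show ?case by (simp add: N2_def)
qed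

lemma zok_iff: "zok n z \<longleftrightarrow> is_partition z \<and> distinct z \<and> (\<forall>x\<in>set z. odd x \<and> 2 * n + 1 \<le> x)"
proof
  show "zok n z \<Longrightarrow> is_partition z \<and> distinct z \<and> (\<forall>x\<in>set z. odd x \<and> 2 * n + 1 \<le> x)"
  proof (induction n z rule: zok.induct)
    case (2 n a)
    then show ?case by (auto simp: is_partition_def odd_pos)
  next
    case (3 n a b zs)
    have IH: "is_partition (b # zs) \<and> distinct (b # zs) \<and> (\<forall>x\<in>set (b # zs). odd x \<and> 2 * n + 1 \<le> x)"
      using 3 by simp
    have ba: "b < a" "odd a" using "3.prems" by auto
    have "\<forall>x\<in>set zs. x \<le> b" using IH by (simp add: is_partition_def)
    then have lt: "\<forall>x\<in>set (b # zs). x < a" using ba by auto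
    have "2 * n + 1 \<le> a" using IH ba by auto
    then show ?case using IH lt ba by (auto simp: is_partition_def odd_pos)
  qed (simp add: is_partition_def)
next
  show "is_partition z \<and> distinct z \<and> (\<forall>x\<in>set z. odd x \<and> 2 * n + 1 \<le> x) \<Longrightarrow> zok n z"
  proof (induction z)
    case (Cons a zs)
    have IH: "zok n zs" using Cons by (simp add: is_partition_def)
    show ?case
    proof (cases zs)
      case Nil
      then show ?thesis using Cons.prems by simp
    next
      case (Cons b zs')
      have "b \<le> a" "b \<noteq> a" using Cons \<open>is_partition (a # zs) \<and> distinct (a # zs) \<and> _\<close> by (auto simp: is_partition_def)
      then show ?thesis using IH Cons \<open>is_partition (a # zs) \<and> distinct (a # zs) \<and> _\<close> by simp
    qed
  qed (simp add: is_partition_def)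
qed

lemma E33_iff: "l \<in> E33 \<longleftrightarrow> goodl l \<and> (\<forall>x\<in>set l. even x)"
  by (simp add: E33_def C33_iff)

lemma F33_iff: "(l, z) \<in> F33 \<longleftrightarrow> goodl l \<and> (\<forall>x\<in>set l. even x) \<and> zok (N2g l) z"
proof -
  have "(l, z) \<in> F33 \<longleftrightarrow> l \<in> E33 \<and> zok (N2 l) z" by (simp add: F33_def zok_iff)
  then show ?thesis using E33_iff N2_eq by auto
qed

theorem theorem5p1:
  shows "\<exists>\<Phi>. bij_betw \<Phi> F33 C33 \<and>
    (\<forall>p z. (p, z) \<in> F33 \<longrightarrow>
        sum_list (\<Phi> (p, z)) = sum_list p + sum_list z \<and>
        length (\<Phi> (p, z)) = length p + length z)"
proof -
  define f where "f = (\<lambda>(l, z). Phi l z)"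
  define g where "g = (\<lambda>w. psi (length (filter odd w)) w)"
  have left: "\<forall>a\<in>F33. g (f a) = a"
  proof
    fix a assume a: "a \<in> F33"
    obtain l z where lz: "a = (l, z)" by (cases a)
    have H: "goodl l" "\<forall>x\<in>set l. even x" "zok (N2g l) z" using a lz F33_iff by auto
    have "length (filter odd (Phi l z)) = length z" using Phi_props[OF H(1) H(2) H(3)] by blast
    then show "g (f a) = a" using psi_Phi[OF H(1) H(2) H(3)] lz by (simp add: f_def g_def)
  qed
  have right: "\<forall>w\<in>C33. f (g w) = w"
  proof
    fix w assume w: "w \<in> C33"
    obtain l z where p: "psi (length (filter odd w)) w = (l, z)" by (cases "psi (length (filter odd w)) w")
    have "Phi l z = w" using Phi_psi[OF w[unfolded C33_iff] refl p] by blast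
    then show "f (g w) = w" using p by (simp add: f_def g_def)
  qed
  have img1: "f ` F33 \<subseteq> C33"
  proof
    fix w assume "w \<in> f ` F33"
    then obtain l z where lz: "(l, z) \<in> F33" "w = Phi l z" by (auto simp: f_def)
    have H: "goodl l" "\<forall>x\<in>set l. even x" "zok (N2g l) z" using lz F33_iff by auto
    show "w \<in> C33" using Phi_props[OF H(1) H(2) H(3)] lz C33_iff by blast
  qed
  have img2: "g ` C33 \<subseteq> F33"
  proof
    fix a assume "a \<in> g ` C33"
    then obtain w where w: "w \<in> C33" "a = g w" by auto
    obtain l z where p: "psi (length (filter odd w)) w = (l, z)" by (cases "psi (length (filter odd w)) w")
    have "goodl l \<and> (\<forall>x\<in>set l. even x) \<and> zok (N2g l) z" using Phi_psi[OF w(1)[unfolded C33_iff] refl p] by blast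
    then show "a \<in> F33" using w p F33_iff by (simp add: g_def)
  qed
  have bij: "bij_betw f F33 C33" by (rule bij_betw_byWitness[OF left right img1 img2])
  have sl: "\<forall>p z. (p, z) \<in> F33 \<longrightarrow> sum_list (f (p, z)) = sum_list p + sum_list z \<and> length (f (p, z)) = length p + length z"
  proof (intro allI impI)
    fix p z assume "(p, z) \<in> F33"
    then have H: "goodl p" "\<forall>x\<in>set p. even x" "zok (N2g p) z" using F33_iff by auto
    show "sum_list (f (p, z)) = sum_list p + sum_list z \<and> length (f (p, z)) = length p + length z"
      using Phi_props[OF H(1) H(2) H(3)] by (simp add: f_def)
  qed
  show ?thesis using bij sl by blast
qed


end
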